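(* $\frac{3n}{2}+o(n)\le\mathrm{sat}_\circlearrowright(n,S_3)=O(n\log_2 n)$.
   Context: $\Omega_n=\{v_0,\dots,v_{n-1}\}$ with cyclic order $v_0<\dots<v_{n-1}<v_0$ (indices mod $n$). A $3$-cgh on $\Omega_n$ is a family of $3$-subsets of $\Omega_n$. For a $3$-cgh $F$, $H$ contains a copy of $F$ if there is an injection of the vertex set of $F$ into $\Omega_n$ preserving the cyclic order and mapping every edge of $F$ to an edge of $H$. $H$ is $F$-saturated if it contains no copy of $F$ but $H\cup\{e\}$ does for every $e\in\binom{\Omega_n}{3}\setminus H$; $\mathrm{sat}_\circlearrowright(n,F)$ is the minimum number of edges of an $F$-saturated $3$-cgh on $\Omega_n$. $S_3$ is the $3$-cgh on $\Omega_5$ with edges $\{v_0,v_1,v_3\}$ and $\{v_0,v_2,v_4\}$. *)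

theory Defs
  imports Complex_Main "HOL-Library.Landau_Symbols"
begin

text \<open>Vertices of Omega_n are the naturals 0..<n (v_i = i), with the cyclic order
  0 < 1 < ... < n-1 < 0.\<close>

definition cyc_between :: "nat \<Rightarrow> nat \<Rightarrow> nat \<Rightarrow> bool" where
  "cyc_between a b c \<longleftrightarrow> (a < b \<and> b < c) \<or> (b < c \<and> c < a) \<or> (c < a \<and> a < b)"

definition cgh3 :: "nat \<Rightarrow> nat set set \<Rightarrow> bool" where
  "cgh3 n H \<longleftrightarrow> (\<forall>e\<in>H. e \<subseteq> {0..<n} \<and> card e = 3)"

definition triples :: "nat \<Rightarrow> nat set set" where
  "triples n = {e. e \<subseteq> {0..<n} \<and> card e = 3}"

definition contains_copy :: "nat \<Rightarrow> nat set set \<Rightarrow> nat \<Rightarrow> nat set set \<Rightarrow> bool" where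
  "contains_copy n H k F \<longleftrightarrow>
     (\<exists>\<phi>. inj_on \<phi> {0..<k} \<and> \<phi> ` {0..<k} \<subseteq> {0..<n} \<and>
          (\<forall>i j l. i < j \<and> j < l \<and> l < k \<longrightarrow> cyc_between (\<phi> i) (\<phi> j) (\<phi> l)) \<and>
          (\<forall>e\<in>F. \<phi> ` e \<in> H))"

definition saturated :: "nat \<Rightarrow> nat set set \<Rightarrow> nat \<Rightarrow> nat set set \<Rightarrow> bool" where
  "saturated n H k F \<longleftrightarrow> cgh3 n H \<and> \<not> contains_copy n H k F \<and>
     (\<forall>e \<in> triples n - H. contains_copy n (insert e H) k F)"

definition sat_cyc :: "nat \<Rightarrow> nat \<Rightarrow> nat set set \<Rightarrow> nat" where
  "sat_cyc n k F = Min (card ` {H. saturated n H k F})"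

definition S3 :: "nat set set" where
  "S3 = {{0,1,3}, {0,2,4}}"

end

theory Submission
  imports Defs
begin



lemma cyc_neq: "cyc_between a b c \<Longrightarrow> a\<noteq>b \<and> b\<noteq>c \<and> a\<noteq>c"
  unfolding cyc_between_def by auto

lemma cyc_first: "cyc_between a b c \<Longrightarrow> a<b \<Longrightarrow> a<c \<Longrightarrow> b<c"
  unfolding cyc_between_def by auto
lemma cyc_mid: "cyc_between a b c \<Longrightarrow> b<a \<Longrightarrow> b<c \<Longrightarrow> c<a"
  unfolding cyc_between_def by auto
lemma cyc_last: "cyc_between a b c \<Longrightarrow> c<a \<Longrightarrow> c<b \<Longrightarrow> a<b"
  unfolding cyc_between_def by auto

lemma sorted3_eq:
  fixes p q r a b c :: nat
  assumes o: "p<q" "q<r" "a<b" "b<c"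
  shows "{p,q,r} = {a,b,c} \<longleftrightarrow> p=a \<and> q=b \<and> r=c"
proof
  assume h: "{p,q,r} = {a,b,c}"
  have m: "p \<in> {a,b,c}" "q \<in> {a,b,c}" "r \<in> {a,b,c}" "a \<in> {p,q,r}" "c \<in> {p,q,r}"
    using h by blast+
  have 1: "a \<le> p" using m(1) o by auto
  have 2: "p \<le> a" using m(4) o by auto
  have 3: "r \<le> c" using m(3) o by auto
  have 4: "c \<le> r" using m(5) o by auto
  have 5: "q = b" using m(2) o 1 2 3 4 by auto
  show "p=a \<and> q=b \<and> r=c" using 1 2 3 4 5 by simp
qed auto

lemma sort3:
  fixes x y z :: nat
  assumes "x\<noteq>y" "x\<noteq>z" "y\<noteq>z"
  shows "\<exists>p q r. p<q \<and> q<r \<and> {x,y,z} = {p,q,r}"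
proof (cases "x<y")
  case xy: True
  show ?thesis
  proof (cases "y<z")
    case True then show ?thesis using xy by blast
  next
    case False
    then have zy: "z<y" using assms by simp
    show ?thesis
    proof (cases "x<z")
      case True
      have "{x,y,z} = {x,z,y}" by blast
      then show ?thesis using True zy by blast
    next
      case False
      then have "z<x" using assms by simp
      moreover have "{x,y,z} = {z,x,y}" by blast
      ultimately show ?thesis using xy by blast
    qed
  qed
next
  case False
  then have yx: "y<x" using assms by simp
  show ?thesis
  proof (cases "x<z")
    case True
    have "{x,y,z} = {y,x,z}" by blast
    then show ?thesis using True yx by blast
  next
    case False
    then have zx: "z<x" using assms by simp
    show ?thesis
    proof (cases "y<z")
      case True
      have "{x,y,z} = {y,z,x}" by blast
      then show ?thesis using True zx by blast
    next
      case False
      then have "z<y" using assms by simp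
      moreover have "{x,y,z} = {z,y,x}" by blast
      ultimately show ?thesis using yx by blast
    qed
  qed
qed

lemma card3_sorted:
  fixes e :: "nat set"
  assumes "card e = 3"
  obtains p q r where "p<q" "q<r" "e = {p,q,r}"
proof -
  obtain x y z where e: "e = {x,y,z}" "x\<noteq>y" "x\<noteq>z" "y\<noteq>z"
    using assms card_3_iff by metis
  show ?thesis using sort3[OF e(2-4)] e(1) that by blast
qed

definition pat :: "nat set set \<Rightarrow> nat \<Rightarrow> nat \<Rightarrow> nat \<Rightarrow> nat \<Rightarrow> nat \<Rightarrow> bool" where
  "pat H v0 v1 v2 v3 v4 \<longleftrightarrow>
     ({v0,v1,v3}\<in>H \<and> {v0,v2,v4}\<in>H) \<or> ({v1,v2,v4}\<in>H \<and> {v0,v1,v3}\<in>H) \<or>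
     ({v0,v2,v3}\<in>H \<and> {v1,v2,v4}\<in>H) \<or> ({v1,v3,v4}\<in>H \<and> {v0,v2,v3}\<in>H) \<or>
     ({v0,v2,v4}\<in>H \<and> {v1,v3,v4}\<in>H)"




lemma mk_copy:
  assumes "w0<n" "w1<n" "w2<n" "w3<n" "w4<n"
    and c: "cyc_between w0 w1 w2" "cyc_between w0 w1 w3" "cyc_between w0 w1 w4"
      "cyc_between w0 w2 w3" "cyc_between w0 w2 w4" "cyc_between w0 w3 w4"
      "cyc_between w1 w2 w3" "cyc_between w1 w2 w4" "cyc_between w1 w3 w4"
      "cyc_between w2 w3 w4"
    and e: "{w0,w1,w3}\<in>H" "{w0,w2,w4}\<in>H"
  shows "contains_copy n H 5 S3"
proof -
  define \<phi> where "\<phi> = (\<lambda>i::nat. if i=0 then w0 else if i=1 then w1 else if i=2 then w2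
       else if i=3 then w3 else w4)"
  have d: "w0\<noteq>w1" "w0\<noteq>w2" "w0\<noteq>w3" "w0\<noteq>w4" "w1\<noteq>w2" "w1\<noteq>w3" "w1\<noteq>w4"
    "w2\<noteq>w3" "w2\<noteq>w4" "w3\<noteq>w4"
    using cyc_neq[OF c(1)] cyc_neq[OF c(2)] cyc_neq[OF c(3)] cyc_neq[OF c(5)] cyc_neq[OF c(6)]
      cyc_neq[OF c(7)] cyc_neq[OF c(8)] cyc_neq[OF c(10)] by auto
  have less5: "\<And>i::nat. i<5 \<Longrightarrow> i=0 \<or> i=1 \<or> i=2 \<or> i=3 \<or> i=4" by auto
  have "inj_on \<phi> {0..<5}"
    unfolding inj_on_def
  proof (intro ballI impI)
    fix x y assume "x \<in> {0..<(5::nat)}" "y \<in> {0..<(5::nat)}" "\<phi> x = \<phi> y"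
    then show "x = y" using less5[of x] less5[of y] d by (auto simp: \<phi>_def)
  qed
  moreover have "\<phi> ` {0..<5} \<subseteq> {0..<n}"
  proof
    fix z assume "z \<in> \<phi> ` {0..<5}"
    then obtain i where "i<5" "z = \<phi> i" by auto
    then show "z \<in> {0..<n}" using less5[of i] assms(1-5) by (auto simp: \<phi>_def)
  qed
  moreover have "\<forall>i j l. i < j \<and> j < l \<and> l < 5 \<longrightarrow> cyc_between (\<phi> i) (\<phi> j) (\<phi> l)"
  proof (intro allI impI)
    fix i j l :: nat assume h: "i < j \<and> j < l \<and> l < 5"
    then have "i<5" "j<5" "l<5" by simp_all
    then show "cyc_between (\<phi> i) (\<phi> j) (\<phi> l)"
      using less5[OF \<open>i<5\<close>] less5[OF \<open>j<5\<close>] less5[OF \<open>l<5\<close>] h c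
      apply (elim disjE)
      apply (simp_all add: \<phi>_def)
      done
  qed
  moreover have "\<forall>e\<in>S3. \<phi> ` e \<in> H"
    using e by (simp add: S3_def \<phi>_def insert_commute)
  ultimately show ?thesis unfolding contains_copy_def by blast
qed




lemma pat_imp_copy:
  assumes "v0<v1" "v1<v2" "v2<v3" "v3<v4" "v4<n" "pat H v0 v1 v2 v3 v4"
  shows "contains_copy n H 5 S3"
proof -
  have lt: "v0<n" "v1<n" "v2<n" "v3<n" "v4<n" using assms by linarith+
  from assms(6) consider "{v0,v1,v3}\<in>H" "{v0,v2,v4}\<in>H" | "{v1,v2,v4}\<in>H" "{v0,v1,v3}\<in>H" |
     "{v0,v2,v3}\<in>H" "{v1,v2,v4}\<in>H" | "{v1,v3,v4}\<in>H" "{v0,v2,v3}\<in>H" |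
     "{v0,v2,v4}\<in>H" "{v1,v3,v4}\<in>H" unfolding pat_def by blast
  then show ?thesis
  proof cases
    case 1 then show ?thesis
      by (intro mk_copy[of v0 n v1 v2 v3 v4]) (use assms lt in \<open>auto simp: cyc_between_def\<close>)
  next
    case 2 then show ?thesis
      by (intro mk_copy[of v1 n v2 v3 v4 v0]) (use assms lt in \<open>auto simp: cyc_between_def insert_commute\<close>)
  next
    case 3 then show ?thesis
      by (intro mk_copy[of v2 n v3 v4 v0 v1]) (use assms lt in \<open>auto simp: cyc_between_def insert_commute\<close>)
  next
    case 4 then show ?thesis
      by (intro mk_copy[of v3 n v4 v0 v1 v2]) (use assms lt in \<open>auto simp: cyc_between_def insert_commute\<close>)
  next
    case 5 then show ?thesis
      by (intro mk_copy[of v4 n v0 v1 v2 v3]) (use assms lt in \<open>auto simp: cyc_between_def insert_commute\<close>)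
  qed
qed




lemma copy_imp_pat:
  assumes "contains_copy n H 5 S3"
  shows "\<exists>v0 v1 v2 v3 v4. v0<v1 \<and> v1<v2 \<and> v2<v3 \<and> v3<v4 \<and> v4<n \<and> pat H v0 v1 v2 v3 v4"
proof -
  obtain \<phi> where inj: "inj_on \<phi> {0..<5}" and rng: "\<phi> ` {0..<5} \<subseteq> {0..<n}"
    and cyc: "\<forall>i j l. i < j \<and> j < l \<and> l < 5 \<longrightarrow> cyc_between (\<phi> i) (\<phi> j) (\<phi> l)"
    and ed: "\<forall>e\<in>S3. \<phi> ` e \<in> H"
    using assms unfolding contains_copy_def by blast
  define a b c d e where "a = \<phi> 0" "b = \<phi> 1" "c = \<phi> 2" "d = \<phi> 3" "e = \<phi> 4"
  have rk: "\<And>k. k<5 \<Longrightarrow> \<phi> k < n" using rng by (auto simp: image_subset_iff)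
  have lt: "a<n" "b<n" "c<n" "d<n" "e<n" unfolding a_b_c_d_e_def by (rule rk; simp)+
  have c1: "cyc_between a b c" "cyc_between a b d" "cyc_between a b e"
      "cyc_between a c d" "cyc_between a c e" "cyc_between a d e"
      "cyc_between b c d" "cyc_between b c e" "cyc_between b d e"
      "cyc_between c d e"
    unfolding a_b_c_d_e_def using cyc by auto
  have E: "{a,b,d} \<in> H" "{a,c,e} \<in> H" using ed unfolding S3_def a_b_c_d_e_def by auto
  have d: "a\<noteq>b" "a\<noteq>c" "a\<noteq>d" "a\<noteq>e" "b\<noteq>c" "b\<noteq>d" "b\<noteq>e" "c\<noteq>d" "c\<noteq>e" "d\<noteq>e"
    using cyc_neq[OF c1(1)] cyc_neq[OF c1(2)] cyc_neq[OF c1(3)] cyc_neq[OF c1(5)] cyc_neq[OF c1(6)]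
      cyc_neq[OF c1(7)] cyc_neq[OF c1(8)] cyc_neq[OF c1(10)] by auto
  define m where "m = min (min (min (min a b) c) d) e"
  have mle: "m \<le> a" "m \<le> b" "m \<le> c" "m \<le> d" "m \<le> e" unfolding m_def by auto
  have meq: "m = a \<or> m = b \<or> m = c \<or> m = d \<or> m = e" unfolding m_def min_def by auto
  consider "a<b" "a<c" "a<d" "a<e" | "b<a" "b<c" "b<d" "b<e" | "c<a" "c<b" "c<d" "c<e"
    | "d<a" "d<b" "d<c" "d<e" | "e<a" "e<b" "e<c" "e<d"
  proof -
    from meq show ?thesis
    proof (elim disjE)
      assume "m = a" then show ?thesis using that(1) mle d by (metis le_neq_implies_less)
    next
      assume "m = b" then show ?thesis using that(2) mle d by (metis le_neq_implies_less)
    next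
      assume "m = c" then show ?thesis using that(3) mle d by (metis le_neq_implies_less)
    next
      assume "m = d" then show ?thesis using that(4) mle d by (metis le_neq_implies_less)
    next
      assume "m = e" then show ?thesis using that(5) mle d by (metis le_neq_implies_less)
    qed
  qed
  then show ?thesis
  proof cases
    case 1
    then have "b<c" "c<d" "d<e"
      using cyc_first[OF c1(1)] cyc_first[OF c1(4)] cyc_first[OF c1(6)] by auto
    moreover have "pat H a b c d e" using E unfolding pat_def by auto
    ultimately show ?thesis using 1 lt by blast
  next
    case 2
    then have "c<d" "d<e" "e<a"
      using cyc_first[OF c1(7)] cyc_first[OF c1(9)] cyc_mid[OF c1(3)] by auto
    moreover have "pat H b c d e a" using E unfolding pat_def by (auto simp: insert_commute)
    ultimately show ?thesis using 2 lt by blast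
  next
    case 3
    then have "d<e" "e<a" "a<b"
      using cyc_first[OF c1(10)] cyc_mid[OF c1(5)] cyc_last[OF c1(1)] by auto
    moreover have "pat H c d e a b" using E unfolding pat_def by (auto simp: insert_commute)
    ultimately show ?thesis using 3 lt by blast
  next
    case 4
    then have "e<a" "a<b" "b<c"
      using cyc_mid[OF c1(6)] cyc_last[OF c1(2)] cyc_last[OF c1(7)] by auto
    moreover have "pat H d e a b c" using E unfolding pat_def by (auto simp: insert_commute)
    ultimately show ?thesis using 4 lt by blast
  next
    case 5
    then have "a<b" "b<c" "c<d"
      using cyc_last[OF c1(3)] cyc_last[OF c1(8)] cyc_last[OF c1(10)] by auto
    moreover have "pat H e a b c d" using E unfolding pat_def by (auto simp: insert_commute)
    ultimately show ?thesis using 5 lt by blast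
  qed
qed






definition memH :: "nat \<Rightarrow> nat \<Rightarrow> nat \<Rightarrow> nat \<Rightarrow> bool" where
  "memH n p q r \<longleftrightarrow> (p=0 \<and> 1\<le>q \<and> r=q+1 \<and> r<n) \<or>
     (p=0 \<and> 1\<le>q \<and> q<r \<and> r<n \<and> (q+r=n \<or> q+r=n+1)) \<or> (1\<le>p \<and> q=p+1 \<and> r=p+2 \<and> r<n)"

definition H0 :: "nat \<Rightarrow> nat set set" where
  "H0 n = {e. \<exists>p q r. p<q \<and> q<r \<and> e={p,q,r} \<and> memH n p q r}"

lemma H0_mem:
  assumes "p<q" "q<r"
  shows "{p,q,r} \<in> H0 n \<longleftrightarrow> memH n p q r"
proof
  assume "{p,q,r} \<in> H0 n"
  then obtain a b c where "a<b" "b<c" "{p,q,r}={a,b,c}" "memH n a b c" unfolding H0_def by blast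
  then show "memH n p q r" using sorted3_eq[OF assms \<open>a<b\<close> \<open>b<c\<close>] by simp
next
  assume "memH n p q r"
  then show "{p,q,r} \<in> H0 n" using assms unfolding H0_def by blast
qed

lemma H0_elem:
  assumes "e \<in> H0 n"
  obtains p q r where "p<q" "q<r" "e={p,q,r}" "memH n p q r"
  using assms unfolding H0_def by blast

lemma card_img_lessThan: "card (f ` {..<(n::nat)}) \<le> n"
  using card_image_le[of "{..<n}" f] by simp

lemma memH_fan: "1\<le>q \<Longrightarrow> q+1<n \<Longrightarrow> memH n 0 q (q+1)"
  unfolding memH_def by simp
lemma memH_zig: "1\<le>q \<Longrightarrow> q<r \<Longrightarrow> r<n \<Longrightarrow> q+r=n \<or> q+r=n+1 \<Longrightarrow> memH n 0 q r"
  unfolding memH_def by blast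
lemma memH_zig1: "1\<le>q \<Longrightarrow> q<r \<Longrightarrow> r<n \<Longrightarrow> q+r=n \<Longrightarrow> memH n 0 q r"
  unfolding memH_def by blast
lemma memH_zig2: "1\<le>q \<Longrightarrow> q<r \<Longrightarrow> r<n \<Longrightarrow> q+r=n+1 \<Longrightarrow> memH n 0 q r"
  unfolding memH_def by blast
lemma memH_con: "1\<le>p \<Longrightarrow> p+2<n \<Longrightarrow> memH n p (p+1) (p+2)"
  unfolding memH_def by simp

lemma H0_card: "card (H0 n) \<le> 4*n"
proof -
  let ?A = "(\<lambda>x. {0,x,x+1}) ` {..<n}" and ?B = "(\<lambda>x. {0,x,n-x}) ` {..<n}"
  let ?C = "(\<lambda>x. {0,x,n+1-x}) ` {..<n}" and ?D = "(\<lambda>a. {a,a+1,a+2}) ` {..<n}"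
  have sub: "H0 n \<subseteq> ?A \<union> ?B \<union> ?C \<union> ?D"
  proof
    fix e assume "e \<in> H0 n"
    then obtain p q r where o: "p<q" "q<r" "e={p,q,r}" and m: "memH n p q r" by (rule H0_elem)
    from m consider "p=0" "r=q+1" "r<n" | "p=0" "r<n" "q+r=n" | "p=0" "r<n" "q+r=n+1"
      | "q=p+1" "r=p+2" "r<n"
      unfolding memH_def by blast
    then show "e \<in> ?A \<union> ?B \<union> ?C \<union> ?D"
    proof cases
      case 1
      then have "e \<in> ?A" using o by auto
      then show ?thesis by blast
    next
      case 2
      then have "e = {0,q,n-q}" "q<n" using o by auto
      then show ?thesis by blast
    next
      case 3
      then have "e = {0,q,n+1-q}" "q<n" using o by auto
      then show ?thesis by blast
    next
      case 4
      then have "e \<in> ?D" using o by auto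
      then show ?thesis by blast
    qed
  qed
  have "card (H0 n) \<le> card (?A \<union> ?B \<union> ?C \<union> ?D)"
    by (rule card_mono[OF _ sub]) simp
  also have "\<dots> \<le> card (?A \<union> ?B \<union> ?C) + card ?D" by (rule card_Un_le)
  also have "card (?A \<union> ?B \<union> ?C) \<le> card (?A \<union> ?B) + card ?C" by (rule card_Un_le)
  also have "card (?A \<union> ?B) \<le> card ?A + card ?B" by (rule card_Un_le)
  finally have "card (H0 n) \<le> card ?A + card ?B + card ?C + card ?D" by simp
  moreover have "card ?A \<le> n" "card ?B \<le> n" "card ?C \<le> n" "card ?D \<le> n"
    by (rule card_img_lessThan)+
  ultimately show ?thesis by linarith
qed




lemma copy_imp_patE:
  assumes "contains_copy n H 5 S3"
  obtains v0 v1 v2 v3 v4 where "v0<v1" "v1<v2" "v2<v3" "v3<v4" "v4<n" "pat H v0 v1 v2 v3 v4"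
  apply (insert copy_imp_pat[OF assms])
  apply (elim exE conjE)
  apply (rule that)
       apply assumption+
  done

lemma H0_free: "\<not> contains_copy n (H0 n) 5 S3"
proof
  assume c: "contains_copy n (H0 n) 5 S3"
  obtain v0 v1 v2 v3 v4 where o: "v0<v1" "v1<v2" "v2<v3" "v3<v4" "v4<n"
    and P: "pat (H0 n) v0 v1 v2 v3 v4" by (rule copy_imp_patE[OF c])
  have mA: "{v0,v1,v3} \<in> H0 n \<longleftrightarrow> memH n v0 v1 v3" by (rule H0_mem) (use o in linarith)+
  have mB: "{v0,v2,v4} \<in> H0 n \<longleftrightarrow> memH n v0 v2 v4" by (rule H0_mem) (use o in linarith)+
  have mC: "{v1,v2,v4} \<in> H0 n \<longleftrightarrow> memH n v1 v2 v4" by (rule H0_mem) (use o in linarith)+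
  have mD: "{v0,v2,v3} \<in> H0 n \<longleftrightarrow> memH n v0 v2 v3" by (rule H0_mem) (use o in linarith)+
  have mE: "{v1,v3,v4} \<in> H0 n \<longleftrightarrow> memH n v1 v3 v4" by (rule H0_mem) (use o in linarith)+
  from P[unfolded pat_def mA mB mC mD mE] consider "memH n v0 v1 v3" "memH n v0 v2 v4" | "memH n v1 v2 v4" "memH n v0 v1 v3"
    | "memH n v0 v2 v3" "memH n v1 v2 v4" | "memH n v1 v3 v4" "memH n v0 v2 v3"
    | "memH n v0 v2 v4" "memH n v1 v3 v4"
    by blast
  then show False
  proof cases
    case 1 then show ?thesis using o by (auto simp: memH_def)
  next
    case 2 then show ?thesis using o by (auto simp: memH_def)
  next
    case 3 then show ?thesis using o by (auto simp: memH_def)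
  next
    case 4 then show ?thesis using o by (auto simp: memH_def)
  next
    case 5 then show ?thesis using o by (auto simp: memH_def)
  qed
qed




lemma H0_sat:
  assumes n: "n \<ge> 6"
  shows "saturated n (H0 n) 5 S3"
  unfolding saturated_def
proof (intro conjI ballI)
  show "cgh3 n (H0 n)" unfolding cgh3_def
  proof
    fix e assume "e \<in> H0 n"
    then obtain p q r where o: "p<q" "q<r" "e={p,q,r}" and m: "memH n p q r" by (rule H0_elem)
    have "r<n" using m unfolding memH_def by auto
    then show "e \<subseteq> {0..<n} \<and> card e = 3" using o by auto
  qed
  show "\<not> contains_copy n (H0 n) 5 S3" by (rule H0_free)
  fix e assume e: "e \<in> triples n - H0 n"
  then have ce: "card e = 3" and es: "e \<subseteq> {0..<n}" unfolding triples_def by auto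
  obtain p q r where o: "p<q" "q<r" "e={p,q,r}" by (rule card3_sorted[OF ce])
  have rn: "r<n" using es o by auto
  have nm: "\<not> memH n p q r" using e o H0_mem[OF o(1,2)] by auto
  let ?H = "insert e (H0 n)"
  have ins: "\<And>a b c. a<b \<Longrightarrow> b<c \<Longrightarrow> memH n a b c \<Longrightarrow> {a,b,c} \<in> ?H"
    using H0_mem by blast
  have ee: "{p,q,r} \<in> ?H" using o by simp
  show "contains_copy n ?H 5 S3"
  proof (cases "p=0")
    case p0: True
    have q1: "1\<le>q" using o p0 by linarith
    have r1: "q+1<r"
    proof (rule ccontr)
      assume "\<not> q+1<r"
      then have "r=q+1" using o by linarith
      then have "memH n p q r" using p0 o rn q1 memH_fan[of q n] by simp
      then show False using nm by blast
    qed
    show ?thesis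
    proof (cases "q+r<n")
      case True
      have "memH n 0 (q+1) (n-q)" by (rule memH_zig2) (use o r1 True p0 in linarith)+
      then have "{0,q+1,n-q} \<in> ?H" by (rule ins[rotated 2]) (use o r1 True p0 in linarith)+
      moreover have "{0,q,r} \<in> ?H" using ee p0 by simp
      ultimately have "pat ?H 0 q (q+1) r (n-q)" unfolding pat_def by blast
      then show ?thesis by (rule pat_imp_copy[rotated 5]) (use o r1 True p0 in linarith)+
    next
      case False
      have r2: "n+1<q+r"
      proof (rule ccontr)
        assume "\<not> n+1<q+r"
        then have "q+r=n \<or> q+r=n+1" using False by arith
        then have "memH n p q r" using p0 o rn q1 memH_zig[of q r n] by simp
        then show False using nm by blast
      qed
      have "memH n 0 (n+1-r) (r-1)" by (rule memH_zig1) (use o r1 r2 rn p0 in linarith)+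
      then have "{0,n+1-r,r-1} \<in> ?H" by (rule ins[rotated 2]) (use o r1 r2 rn p0 in linarith)+
      moreover have "{0,q,r} \<in> ?H" using ee p0 by simp
      ultimately have "pat ?H 0 (n+1-r) q (r-1) r" unfolding pat_def by blast
      then show ?thesis by (rule pat_imp_copy[rotated 5]) (use o r1 r2 rn p0 in linarith)+
    qed
  next
    case p1: False
    have p1': "1\<le>p" using p1 by linarith
    show ?thesis
    proof (cases "p+1<q")
      case True
      have "memH n 0 (q-1) q" using memH_fan[of "q-1" n] True p1 o rn by simp
      then have "{0,q-1,q} \<in> ?H" by (rule ins[rotated 2]) (use True p1 in linarith)+
      moreover have "{p,q,r} \<in> ?H" using ee by simp
      ultimately have "pat ?H 0 p (q-1) q r" unfolding pat_def by blast
      then show ?thesis by (rule pat_imp_copy[rotated 5]) (use o True p1 rn in linarith)+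
    next
      case False
      then have qp: "q=p+1" using o by linarith
      have r1: "q+1<r"
      proof (rule ccontr)
        assume "\<not> q+1<r"
        then have "r=p+2" using o qp by linarith
        then have "memH n p q r" using p1' qp rn memH_con[of p n] by simp
        then show False using nm by blast
      qed
      have "memH n 0 q (q+1)" using memH_fan[of q n] r1 rn o by simp
      then have "{0,q,q+1} \<in> ?H" by (rule ins[rotated 2]) (use o in linarith)+
      moreover have "{p,q,r} \<in> ?H" using ee by simp
      ultimately have "pat ?H 0 p q (q+1) r" unfolding pat_def by blast
      then show ?thesis by (rule pat_imp_copy[rotated 5]) (use o r1 p1 rn in linarith)+
    qed
  qed
qed






definition W0s :: "nat \<Rightarrow> nat \<Rightarrow> nat \<Rightarrow> nat \<Rightarrow> bool" where
  "W0s i p q r \<longleftrightarrow> (p=i \<and> q=i+1 \<and> r=i+3) \<or> (p=i \<and> q=i+2 \<and> i+3<r) \<or> (q=i \<and> r=i+2 \<and> p<i)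
     \<or> (p=i+1 \<and> q=i+2 \<and> i+3<r) \<or> (q=i+1 \<and> r=i+2 \<and> p<i)"

definition W1s :: "nat \<Rightarrow> nat \<Rightarrow> nat \<Rightarrow> nat \<Rightarrow> bool" where
  "W1s i p q r \<longleftrightarrow> (p=i \<and> q=i+2 \<and> r=i+3) \<or> (p=i+1 \<and> q=i+3 \<and> i+3<r) \<or> (q=i+1 \<and> r=i+3 \<and> p<i)
     \<or> (p=i+1 \<and> q=i+2 \<and> i+3<r) \<or> (q=i+1 \<and> r=i+2 \<and> p<i)"

definition Ws :: "nat \<Rightarrow> nat \<Rightarrow> nat \<Rightarrow> nat \<Rightarrow> nat \<Rightarrow> bool" where
  "Ws t i p q r \<longleftrightarrow> (if t=0 then W0s i p q r else W1s i p q r)"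

lemma sat_insert_patE:
  assumes sat: "saturated n H 5 S3" and t: "t \<in> triples n" "t \<notin> H"
  obtains v0 v1 v2 v3 v4 where "v0<v1" "v1<v2" "v2<v3" "v3<v4" "v4<n"
           "pat (insert t H) v0 v1 v2 v3 v4" "\<not> pat H v0 v1 v2 v3 v4"
proof -
  have c: "contains_copy n (insert t H) 5 S3" using sat t unfolding saturated_def by simp
  obtain v0 v1 v2 v3 v4 where o: "v0<v1" "v1<v2" "v2<v3" "v3<v4" "v4<n"
    and P: "pat (insert t H) v0 v1 v2 v3 v4" by (rule copy_imp_patE[OF c])
  have nc: "\<not> contains_copy n H 5 S3" using sat unfolding saturated_def by simp
  have "\<not> pat H v0 v1 v2 v3 v4"
  proof
    assume "pat H v0 v1 v2 v3 v4"
    then have "contains_copy n H 5 S3" by (rule pat_imp_copy[OF o])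
    then show False using nc by contradiction
  qed
  then show ?thesis by (rule that[OF o P])
qed

lemma ins_mem:
  fixes a b c x y z :: nat
  assumes "a<b" "b<c" "x<y" "y<z"
  shows "{a,b,c} \<in> insert {x,y,z} H \<longleftrightarrow> (a=x \<and> b=y \<and> c=z) \<or> {a,b,c} \<in> H"
  using sorted3_eq[OF assms] by auto

lemma force_C:
  assumes sat: "saturated n H 5 S3" and i: "i+2<n"
  shows "{i,i+1,i+2} \<in> H"
proof (rule ccontr)
  assume nH: "{i,i+1,i+2} \<notin> H"
  have "{i,i+1,i+2} \<in> triples n" unfolding triples_def using i by auto
  then obtain v0 v1 v2 v3 v4 where o: "v0<v1" "v1<v2" "v2<v3" "v3<v4" "v4<n"
    and P: "pat (insert {i,i+1,i+2} H) v0 v1 v2 v3 v4" and nP: "\<not> pat H v0 v1 v2 v3 v4"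
    by (rule sat_insert_patE[OF sat _ nH])
  have ii: "i<i+1" "i+1<i+2" by simp_all
  have mA: "{v0,v1,v3} \<in> insert {i,i+1,i+2} H \<longleftrightarrow> (v0=i \<and> v1=i+1 \<and> v3=i+2) \<or> {v0,v1,v3} \<in> H"
    by (rule ins_mem) (use o in linarith)+
  have mB: "{v0,v2,v4} \<in> insert {i,i+1,i+2} H \<longleftrightarrow> (v0=i \<and> v2=i+1 \<and> v4=i+2) \<or> {v0,v2,v4} \<in> H"
    by (rule ins_mem) (use o in linarith)+
  have mC: "{v1,v2,v4} \<in> insert {i,i+1,i+2} H \<longleftrightarrow> (v1=i \<and> v2=i+1 \<and> v4=i+2) \<or> {v1,v2,v4} \<in> H"
    by (rule ins_mem) (use o in linarith)+
  have mD: "{v0,v2,v3} \<in> insert {i,i+1,i+2} H \<longleftrightarrow> (v0=i \<and> v2=i+1 \<and> v3=i+2) \<or> {v0,v2,v3} \<in> H"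
    by (rule ins_mem) (use o in linarith)+
  have mE: "{v1,v3,v4} \<in> insert {i,i+1,i+2} H \<longleftrightarrow> (v1=i \<and> v3=i+1 \<and> v4=i+2) \<or> {v1,v3,v4} \<in> H"
    by (rule ins_mem) (use o in linarith)+
  have nA: "\<not> (v0=i \<and> v1=i+1 \<and> v3=i+2)" using o by linarith
  have nB: "\<not> (v0=i \<and> v2=i+1 \<and> v4=i+2)" using o by linarith
  have nC: "\<not> (v1=i \<and> v2=i+1 \<and> v4=i+2)" using o by linarith
  have nD: "\<not> (v0=i \<and> v2=i+1 \<and> v3=i+2)" using o by linarith
  have nE: "\<not> (v1=i \<and> v3=i+1 \<and> v4=i+2)" using o by linarith
  show False using P nP unfolding pat_def mA mB mC mD mE using nA nB nC nD nE by blast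
qed




lemma card_ins_le: "finite A \<Longrightarrow> card (insert x A) \<le> Suc (card A)"
  by (simp add: card_insert_if)

lemma card4: "card {a,b,c,d} \<le> 4"
proof -
  have "card {a,b,c,d} \<le> Suc (card {b,c,d})" by (rule card_ins_le) simp
  also have "card {b,c,d} \<le> Suc (card {c,d})" by (rule card_ins_le) simp
  also have "card {c,d} \<le> Suc (card {d})" by (rule card_ins_le) simp
  finally show ?thesis by simp
qed

lemma card2: "card {a,b} \<le> 2"
proof -
  have "card {a,b} \<le> Suc (card {b})" by (rule card_ins_le) simp
  then show ?thesis by simp
qed

lemma fiber_card:
  assumes o: "p<q" "q<r"
  shows "card {(i,t). i+3<n \<and> t<(2::nat) \<and> Ws t i p q r} \<le> 4"
proof -
  define L :: "(nat \<times> nat) list" where "L = (if q=p+1 then (if r=q+2 then [(p-1,0),(p-1,1),(p,0),(p+1,0)] else [(p-1,0),(p-1,1),(p-1,0),(p-1,0)])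
   else if q=p+2 then (if r=q+1 then [(p-1,1),(p,1),(p+1,0),(p+1,1)] else if r=q+2 then [(p-1,1),(p,0),(p+1,1),(p+2,0)] else [(p-1,1),(p,0),(p,0),(p,0)])
   else (if r=q+1 then [(q-1,0),(q-1,1),(q-1,0),(q-1,0)] else if r=q+2 then [(q-1,1),(q,0),(q,0),(q,0)] else [(0,0),(0,0),(0,0),(0,0)]))"
  define S where "S = set L"
  have sub: "{(i,t). i+3<n \<and> t<(2::nat) \<and> Ws t i p q r} \<subseteq> S"
  proof
    fix x assume "x \<in> {(i,t). i+3<n \<and> t<(2::nat) \<and> Ws t i p q r}"
    then obtain i t where x: "x=(i,t)" "t<2" "Ws t i p q r" by auto
    have "(t=0 \<and> W0s i p q r) \<or> (t=1 \<and> W1s i p q r)" using x(2,3) unfolding Ws_def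
      by (cases "t=0") auto
    then consider "t=0" "W0s i p q r" | "t=1" "W1s i p q r" by blast
    then show "x \<in> S"
    proof cases
      case 1 then show ?thesis using o x(1) unfolding S_def L_def W0s_def by (auto split: if_split)
    next
      case 2 then show ?thesis using o x(1) unfolding S_def L_def W1s_def by (auto split: if_split)
    qed
  qed
  have "length L = 4" unfolding L_def by simp
  then have "card S \<le> 4" unfolding S_def using card_length[of L] by simp
  moreover have "finite S" unfolding S_def by auto
  ultimately show ?thesis using card_mono[OF _ sub] by (meson le_trans)
qed

lemma Ws_not_consec:
  assumes "Ws t i p q r"
  shows "\<not> (q=p+1 \<and> r=p+2)"
  using assms unfolding Ws_def W0s_def W1s_def by (auto split: if_splits)





lemma force_W0:
  assumes sat: "saturated n H 5 S3" and i: "i+3<n"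
  shows "\<exists>p q r. p<q \<and> q<r \<and> {p,q,r} \<in> H \<and> W0s i p q r"
proof (cases "{i,i+1,i+3} \<in> H")
  case True
  then show ?thesis unfolding W0s_def by (intro exI[of _ i] exI[of _ "i+1"] exI[of _ "i+3"]) auto
next
  case nH: False
  have "{i,i+1,i+3} \<in> triples n" unfolding triples_def using i by auto
  then obtain v0 v1 v2 v3 v4 where o: "v0<v1" "v1<v2" "v2<v3" "v3<v4" "v4<n"
    and P: "pat (insert {i,i+1,i+3} H) v0 v1 v2 v3 v4" and nP: "\<not> pat H v0 v1 v2 v3 v4"
    by (rule sat_insert_patE[OF sat _ nH])
  define eA where "eA \<longleftrightarrow> (v0=i \<and> v1=i+1 \<and> v3=i+3)"
  define eB where "eB \<longleftrightarrow> (v0=i \<and> v2=i+1 \<and> v4=i+3)"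
  define eC where "eC \<longleftrightarrow> (v1=i \<and> v2=i+1 \<and> v4=i+3)"
  define eD where "eD \<longleftrightarrow> (v0=i \<and> v2=i+1 \<and> v3=i+3)"
  define eE where "eE \<longleftrightarrow> (v1=i \<and> v3=i+1 \<and> v4=i+3)"
  have mA: "{v0,v1,v3} \<in> insert {i,i+1,i+3} H \<longleftrightarrow> eA \<or> {v0,v1,v3} \<in> H"
    unfolding eA_def by (rule ins_mem) (use o in linarith)+
  have mB: "{v0,v2,v4} \<in> insert {i,i+1,i+3} H \<longleftrightarrow> eB \<or> {v0,v2,v4} \<in> H"
    unfolding eB_def by (rule ins_mem) (use o in linarith)+
  have mC: "{v1,v2,v4} \<in> insert {i,i+1,i+3} H \<longleftrightarrow> eC \<or> {v1,v2,v4} \<in> H"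
    unfolding eC_def by (rule ins_mem) (use o in linarith)+
  have mD: "{v0,v2,v3} \<in> insert {i,i+1,i+3} H \<longleftrightarrow> eD \<or> {v0,v2,v3} \<in> H"
    unfolding eD_def by (rule ins_mem) (use o in linarith)+
  have mE: "{v1,v3,v4} \<in> insert {i,i+1,i+3} H \<longleftrightarrow> eE \<or> {v1,v3,v4} \<in> H"
    unfolding eE_def by (rule ins_mem) (use o in linarith)+
  have nB: "\<not> eB" unfolding eB_def using o by linarith
  have nD: "\<not> eD" unfolding eD_def using o by linarith
  have nE: "\<not> eE" unfolding eE_def using o by linarith
  have xAC: "\<not> (eA \<and> eC)" unfolding eA_def eC_def using o by linarith
  have key: "\<And>p q r. p<q \<Longrightarrow> q<r \<Longrightarrow> {p,q,r} \<in> H \<Longrightarrow> W0s i p q r \<Longrightarrow> ?thesis"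
    by (rule exI, rule exI, rule exI, simp)
  have wAB: "eA \<Longrightarrow> {v0,v2,v4} \<in> H \<Longrightarrow> ?thesis"
  proof -
    assume e: eA and h: "{v0,v2,v4} \<in> H"
    have f: "v0=i" "v2=i+2" "i+3<v4" using e o unfolding eA_def by linarith+
    have w: "W0s i v0 v2 v4" unfolding W0s_def using f by simp
    show ?thesis by (rule key[OF _ _ h w]) (use o in linarith)+
  qed
  have wAC: "eA \<Longrightarrow> {v1,v2,v4} \<in> H \<Longrightarrow> ?thesis"
  proof -
    assume e: eA and h: "{v1,v2,v4} \<in> H"
    have f: "v1=i+1" "v2=i+2" "i+3<v4" using e o unfolding eA_def by linarith+
    have w: "W0s i v1 v2 v4" unfolding W0s_def using f by simp
    show ?thesis by (rule key[OF _ _ h w]) (use o in linarith)+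
  qed
  have wCA: "eC \<Longrightarrow> {v0,v1,v3} \<in> H \<Longrightarrow> ?thesis"
  proof -
    assume e: eC and h: "{v0,v1,v3} \<in> H"
    have f: "v1=i" "v3=i+2" "v0<i" using e o unfolding eC_def by linarith+
    have w: "W0s i v0 v1 v3" unfolding W0s_def using f by simp
    show ?thesis by (rule key[OF _ _ h w]) (use o in linarith)+
  qed
  have wCD: "eC \<Longrightarrow> {v0,v2,v3} \<in> H \<Longrightarrow> ?thesis"
  proof -
    assume e: eC and h: "{v0,v2,v3} \<in> H"
    have f: "v2=i+1" "v3=i+2" "v0<i" using e o unfolding eC_def by linarith+
    have w: "W0s i v0 v2 v3" unfolding W0s_def using f by simp
    show ?thesis by (rule key[OF _ _ h w]) (use o in linarith)+
  qed
  show ?thesis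
    using P[unfolded pat_def mA mB mC mD mE] nP[unfolded pat_def] nB nD nE xAC wAB wAC wCA wCD
    by blast
qed

lemma force_W1:
  assumes sat: "saturated n H 5 S3" and i: "i+3<n"
  shows "\<exists>p q r. p<q \<and> q<r \<and> {p,q,r} \<in> H \<and> W1s i p q r"
proof (cases "{i,i+2,i+3} \<in> H")
  case True
  then show ?thesis unfolding W1s_def by (intro exI[of _ i] exI[of _ "i+2"] exI[of _ "i+3"]) auto
next
  case nH: False
  have "{i,i+2,i+3} \<in> triples n" unfolding triples_def using i by auto
  then obtain v0 v1 v2 v3 v4 where o: "v0<v1" "v1<v2" "v2<v3" "v3<v4" "v4<n"
    and P: "pat (insert {i,i+2,i+3} H) v0 v1 v2 v3 v4" and nP: "\<not> pat H v0 v1 v2 v3 v4"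
    by (rule sat_insert_patE[OF sat _ nH])
  define eA where "eA \<longleftrightarrow> (v0=i \<and> v1=i+2 \<and> v3=i+3)"
  define eB where "eB \<longleftrightarrow> (v0=i \<and> v2=i+2 \<and> v4=i+3)"
  define eC where "eC \<longleftrightarrow> (v1=i \<and> v2=i+2 \<and> v4=i+3)"
  define eD where "eD \<longleftrightarrow> (v0=i \<and> v2=i+2 \<and> v3=i+3)"
  define eE where "eE \<longleftrightarrow> (v1=i \<and> v3=i+2 \<and> v4=i+3)"
  have mA: "{v0,v1,v3} \<in> insert {i,i+2,i+3} H \<longleftrightarrow> eA \<or> {v0,v1,v3} \<in> H"
    unfolding eA_def by (rule ins_mem) (use o in linarith)+
  have mB: "{v0,v2,v4} \<in> insert {i,i+2,i+3} H \<longleftrightarrow> eB \<or> {v0,v2,v4} \<in> H"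
    unfolding eB_def by (rule ins_mem) (use o in linarith)+
  have mC: "{v1,v2,v4} \<in> insert {i,i+2,i+3} H \<longleftrightarrow> eC \<or> {v1,v2,v4} \<in> H"
    unfolding eC_def by (rule ins_mem) (use o in linarith)+
  have mD: "{v0,v2,v3} \<in> insert {i,i+2,i+3} H \<longleftrightarrow> eD \<or> {v0,v2,v3} \<in> H"
    unfolding eD_def by (rule ins_mem) (use o in linarith)+
  have mE: "{v1,v3,v4} \<in> insert {i,i+2,i+3} H \<longleftrightarrow> eE \<or> {v1,v3,v4} \<in> H"
    unfolding eE_def by (rule ins_mem) (use o in linarith)+
  have nA: "\<not> eA" unfolding eA_def using o by linarith
  have nB: "\<not> eB" unfolding eB_def using o by linarith
  have nC: "\<not> eC" unfolding eC_def using o by linarith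
  have xDE: "\<not> (eD \<and> eE)" unfolding eD_def eE_def using o by linarith
  have key: "\<And>p q r. p<q \<Longrightarrow> q<r \<Longrightarrow> {p,q,r} \<in> H \<Longrightarrow> W1s i p q r \<Longrightarrow> ?thesis"
    by (rule exI, rule exI, rule exI, simp)
  have wDC: "eD \<Longrightarrow> {v1,v2,v4} \<in> H \<Longrightarrow> ?thesis"
  proof -
    assume e: eD and h: "{v1,v2,v4} \<in> H"
    have f: "v1=i+1" "v2=i+2" "i+3<v4" using e o unfolding eD_def by linarith+
    have w: "W1s i v1 v2 v4" unfolding W1s_def using f by simp
    show ?thesis by (rule key[OF _ _ h w]) (use o in linarith)+
  qed
  have wDE: "eD \<Longrightarrow> {v1,v3,v4} \<in> H \<Longrightarrow> ?thesis"
  proof -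
    assume e: eD and h: "{v1,v3,v4} \<in> H"
    have f: "v1=i+1" "v3=i+3" "i+3<v4" using e o unfolding eD_def by linarith+
    have w: "W1s i v1 v3 v4" unfolding W1s_def using f by simp
    show ?thesis by (rule key[OF _ _ h w]) (use o in linarith)+
  qed
  have wED: "eE \<Longrightarrow> {v0,v2,v3} \<in> H \<Longrightarrow> ?thesis"
  proof -
    assume e: eE and h: "{v0,v2,v3} \<in> H"
    have f: "v2=i+1" "v3=i+2" "v0<i" using e o unfolding eE_def by linarith+
    have w: "W1s i v0 v2 v3" unfolding W1s_def using f by simp
    show ?thesis by (rule key[OF _ _ h w]) (use o in linarith)+
  qed
  have wEB: "eE \<Longrightarrow> {v0,v2,v4} \<in> H \<Longrightarrow> ?thesis"
  proof -
    assume e: eE and h: "{v0,v2,v4} \<in> H"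
    have f: "v2=i+1" "v4=i+3" "v0<i" using e o unfolding eE_def by linarith+
    have w: "W1s i v0 v2 v4" unfolding W1s_def using f by simp
    show ?thesis by (rule key[OF _ _ h w]) (use o in linarith)+
  qed
  show ?thesis
    using P[unfolded pat_def mA mB mC mD mE] nP[unfolded pat_def] nA nB nC xDE wDC wDE wED wEB
    by blast
qed



lemma lower_bound:
  assumes sat: "saturated n H 5 S3" and n: "n \<ge> 4"
  shows "2*(n-3) + 4*(n-2) \<le> 4 * card H"
proof -
  have Htr: "H \<subseteq> triples n" using sat unfolding saturated_def cgh3_def triples_def by auto
  have fintr: "finite (triples n)"
    by (rule finite_subset[of _ "Pow {0..<n}"]) (auto simp: triples_def)
  have finH: "finite H" using Htr fintr finite_subset by blast
  define Cl where "Cl = (\<lambda>j. {j,j+1,j+2}) ` {..<n-2}"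
  have ClH: "Cl \<subseteq> H" using force_C[OF sat] unfolding Cl_def by auto
  have injC: "inj_on (\<lambda>j::nat. {j,j+1,j+2}) {..<n-2}"
  proof (rule inj_onI)
    fix x y :: nat assume "{x,x+1,x+2} = {y,y+1,y+2}"
    then show "x = y" using sorted3_eq[of x "x+1" "x+2" y "y+1" "y+2"] by simp
  qed
  have cardCl: "card Cl = n-2" unfolding Cl_def using card_image[OF injC] by simp
  define M where "M = H - Cl"
  have finM: "finite M" using finH unfolding M_def by simp
  have cardH: "card H = card Cl + card M"
    unfolding M_def using card_Diff_subset[OF finite_subset[OF ClH finH] ClH] card_mono[OF finH ClH]
    by simp
  define F where "F e = {(i,t). i+3<n \<and> t<(2::nat) \<and> (\<exists>p q r. p<q \<and> q<r \<and> e={p,q,r} \<and> Ws t i p q r)}" for e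
  define R where "R = {..<n-3} \<times> {..<(2::nat)}"
  have FR: "F e \<subseteq> R" for e unfolding F_def R_def by auto
  have finR: "finite R" unfolding R_def by simp
  have Fcard: "card (F e) \<le> 4" if "e \<in> H" for e
  proof -
    have "card e = 3" using that Htr unfolding triples_def by auto
    then obtain p q r where o: "p<q" "q<r" "e={p,q,r}" by (rule card3_sorted)
    have "F e = {(i,t). i+3<n \<and> t<(2::nat) \<and> Ws t i p q r}"
    proof -
      have "(\<exists>a b c. a<b \<and> b<c \<and> e={a,b,c} \<and> Ws t i a b c) \<longleftrightarrow> Ws t i p q r" for t i
      proof
        assume "\<exists>a b c. a<b \<and> b<c \<and> e={a,b,c} \<and> Ws t i a b c"
        then obtain a b c where h: "a<b" "b<c" "e={a,b,c}" "Ws t i a b c" by blast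
        then have "p=a \<and> q=b \<and> r=c" using sorted3_eq[OF o(1,2) h(1,2)] o(3) by simp
        then show "Ws t i p q r" using h by simp
      qed (use o in blast)
      then show ?thesis unfolding F_def by simp
    qed
    then show ?thesis using fiber_card[OF o(1,2)] by simp
  qed
  have cardR: "card R = (n-3)*2" unfolding R_def by simp
  have RU: "R \<subseteq> (\<Union>e\<in>M. F e)"
  proof
    fix x assume "x \<in> R"
    then obtain i t where x: "x=(i,t)" "i+3<n" "t<2" unfolding R_def by auto
    have "\<exists>p q r. p<q \<and> q<r \<and> {p,q,r} \<in> H \<and> Ws t i p q r"
    proof (cases "t=0")
      case True then show ?thesis using force_W0[OF sat x(2)] unfolding Ws_def by simp
    next
      case False then show ?thesis using force_W1[OF sat x(2)] unfolding Ws_def by simp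
    qed
    then obtain p q r where w: "p<q" "q<r" "{p,q,r} \<in> H" "Ws t i p q r" by blast
    have "{p,q,r} \<notin> Cl"
    proof
      assume "{p,q,r} \<in> Cl"
      then obtain j where "{p,q,r} = {j,j+1,j+2}" unfolding Cl_def by auto
      then have "p=j \<and> q=j+1 \<and> r=j+2" using sorted3_eq[OF w(1,2), of j "j+1" "j+2"] by simp
      then show False using Ws_not_consec[OF w(4)] by simp
    qed
    then have "{p,q,r} \<in> M" using w(3) unfolding M_def by simp
    moreover have "x \<in> F {p,q,r}" unfolding F_def using x w by blast
    ultimately show "x \<in> (\<Union>e\<in>M. F e)" by blast
  qed
  have "card R \<le> card (\<Union>e\<in>M. F e)"
    by (rule card_mono[OF _ RU]) (use finM FR finR finite_subset in blast)
  also have "\<dots> \<le> (\<Sum>e\<in>M. card (F e))" by (rule card_UN_le[OF finM])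
  also have "\<dots> \<le> (\<Sum>e\<in>M. 4)" by (rule sum_mono) (use Fcard M_def in auto)
  also have "\<dots> = 4 * card M" by simp
  finally have "(n-3)*2 \<le> 4 * card M" using cardR by simp
  then show ?thesis using cardH cardCl by simp
qed





lemma sat_bounds:
  assumes n: "n \<ge> 6"
  shows "sat_cyc n 5 S3 \<le> 4*n" "2*(n-3) + 4*(n-2) \<le> 4 * sat_cyc n 5 S3"
proof -
  define S where "S = {H. saturated n H 5 S3}"
  have fintr: "finite (triples n)"
    by (rule finite_subset[of _ "Pow {0..<n}"]) (auto simp: triples_def)
  have "S \<subseteq> Pow (triples n)"
    unfolding S_def saturated_def cgh3_def triples_def by auto
  then have finS: "finite S" using fintr by (meson finite_Pow_iff finite_subset)
  have H0S: "H0 n \<in> S" unfolding S_def using H0_sat[OF n] by simp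
  have eq: "sat_cyc n 5 S3 = Min (card ` S)" unfolding sat_cyc_def S_def by simp
  have "Min (card ` S) \<le> card (H0 n)" using finS H0S by simp
  then show "sat_cyc n 5 S3 \<le> 4*n" using eq H0_card[of n] by simp
  have "Min (card ` S) \<in> card ` S" using finS H0S by (intro Min_in) auto
  then obtain H where "H \<in> S" "Min (card ` S) = card H" by auto
  then show "2*(n-3) + 4*(n-2) \<le> 4 * sat_cyc n 5 S3"
    using lower_bound[of n H] n eq unfolding S_def by simp
qed

lemma const_smallo: "(\<lambda>_::nat. (-4::real)) \<in> o(\<lambda>n. real n)"
proof (rule smalloI_tendsto)
  show "((\<lambda>x::nat. (-4::real) / real x) \<longlongrightarrow> 0) at_top"
    by (rule tendsto_divide_0[OF tendsto_const])
       (rule filterlim_at_top_imp_at_infinity[OF filterlim_real_sequentially])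
  show "\<forall>\<^sub>F x in at_top. real x \<noteq> 0"
    using eventually_gt_at_top[of "0::nat"] by (auto elim: eventually_mono)
qed

theorem propositionA4:
  shows "(\<exists>g :: nat \<Rightarrow> real. g \<in> o(\<lambda>n. real n) \<and>
            (\<forall>\<^sub>F n in at_top. 3 * real n / 2 + g n \<le> real (sat_cyc n 5 S3)))
         \<and> (\<lambda>n. real (sat_cyc n 5 S3)) \<in> O(\<lambda>n. real n * log 2 (real n))"
proof
  show "\<exists>g :: nat \<Rightarrow> real. g \<in> o(\<lambda>n. real n) \<and>
            (\<forall>\<^sub>F n in at_top. 3 * real n / 2 + g n \<le> real (sat_cyc n 5 S3))"
  proof (intro exI conjI)
    show "(\<lambda>_::nat. (-4::real)) \<in> o(\<lambda>n. real n)" by (rule const_smallo)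
    show "\<forall>\<^sub>F n in at_top. 3 * real n / 2 + (-4) \<le> real (sat_cyc n 5 S3)"
    proof (rule eventually_mono[OF eventually_ge_at_top[of 6]])
      fix n :: nat assume n: "6 \<le> n"
      have h: "2*(n-3) + 4*(n-2) \<le> 4 * sat_cyc n 5 S3" using sat_bounds(2)[OF n] .
      have "6*n \<le> 4 * sat_cyc n 5 S3 + 14" using h n by linarith
      then have "real (6*n) \<le> real (4 * sat_cyc n 5 S3 + 14)" by (simp only: of_nat_le_iff)
      then have "6 * real n \<le> 4 * real (sat_cyc n 5 S3) + 14" by simp
      then show "3 * real n / 2 + (-4) \<le> real (sat_cyc n 5 S3)" by simp
    qed
  qed
  show "(\<lambda>n. real (sat_cyc n 5 S3)) \<in> O(\<lambda>n. real n * log 2 (real n))"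
  proof (rule bigoI[where c=4])
    show "\<forall>\<^sub>F n in at_top. norm (real (sat_cyc n 5 S3)) \<le> 4 * norm (real n * log 2 (real n))"
    proof (rule eventually_mono[OF eventually_ge_at_top[of 6]])
      fix n :: nat assume n: "6 \<le> n"
      have l: "1 \<le> log 2 (real n)"
      proof -
        have "log 2 (2::real) \<le> log 2 (real n)" using n by (subst log_le_cancel_iff) auto
        then show ?thesis by simp
      qed
      have "real (sat_cyc n 5 S3) \<le> 4 * real n" using sat_bounds(1)[OF n] by (simp add: of_nat_le_iff[symmetric])
      also have "\<dots> \<le> 4 * (real n * log 2 (real n))" using l by (simp add: mult_le_cancel_left1)
      finally show "norm (real (sat_cyc n 5 S3)) \<le> 4 * norm (real n * log 2 (real n))"
        using l by simp
    qed
  qed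
qed


end
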